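(* Let $X$ be a finite-dimensional real Hilbert space and $A,B$ nonempty closed convex subsets with $A\cap B\ne\varnothing$. Let $L=\operatorname{aff}(A\cup B)$ and $T=P_BR_A+\mathrm{Id}-P_A$. Then: (a) $T^n=\mathrm{Id}-P_L+T^nP_L$ for all $n\in\mathbb N$; (b) $\mathrm{Id}-T=P_L-TP_L$. If in addition $\operatorname{ri}A\cap\operatorname{ri}B\ne\varnothing$, then (c) $P_{\operatorname{Fix}T}=\mathrm{Id}-P_L+P_{A\cap B}P_L$ and (d) $d_{\operatorname{Fix}T}=d_{A\cap B}\circ P_L$.
   Context: $P_S$ is the metric projection onto a closed convex set $S$, $R_S=2P_S-\mathrm{Id}$, $d_S$ the distance function, $\operatorname{aff}$ the affine hull, $\operatorname{ri}$ the relative interior, $T^0=\mathrm{Id}$. *)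

theory Defs
  imports "HOL-Analysis.Analysis"
begin

text \<open>Metric projection P_S is the library's closest_point S.
  Reflector R_S = 2 P_S - Id.\<close>
definition reflector :: "'a::euclidean_space set \<Rightarrow> 'a \<Rightarrow> 'a" where
  "reflector S x = 2 *\<^sub>R closest_point S x - x"

definition DR_op :: "'a::euclidean_space set \<Rightarrow> 'a set \<Rightarrow> 'a \<Rightarrow> 'a" where
  "DR_op A B x = closest_point B (reflector A x) + x - closest_point A x"

definition Fix :: "('a \<Rightarrow> 'a) \<Rightarrow> 'a set" where
  "Fix T = {x. T x = x}"

end

theory Submission
  imports Defs
begin

definition WL :: "'a::euclidean_space set \<Rightarrow> 'a set" where
  "WL L = {w. \<forall>a\<in>L. \<forall>b\<in>L. w \<bullet> (a - b) = 0}"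

lemma WL_pyth:
  assumes "w \<in> WL L" "a \<in> L" "b \<in> L"
  shows "norm (w + (a - b))^2 = norm w ^2 + norm (a - b)^2"
proof -
  have "w \<bullet> (a - b) = 0" using assms unfolding WL_def by auto
  then show ?thesis by (simp add: power2_norm_eq_inner inner_add_left inner_add_right inner_commute)
qed

lemma WL_add: "u \<in> WL L \<Longrightarrow> v \<in> WL L \<Longrightarrow> u + v \<in> WL L"
  unfolding WL_def by (simp add: inner_add_left)
lemma WL_minus: "u \<in> WL L \<Longrightarrow> - u \<in> WL L"
  unfolding WL_def by simp
lemma WL_diff: "u \<in> WL L \<Longrightarrow> v \<in> WL L \<Longrightarrow> u - v \<in> WL L"
  unfolding WL_def by (simp add: inner_diff_left)

lemma dist_le_from_sq:
  fixes x y :: "'a::euclidean_space"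
  assumes "norm x ^2 \<le> norm y ^2" shows "norm x \<le> norm y"
  using assms by (simp add: power_mono_iff)

lemma orth_cp:
  fixes L :: "'a::euclidean_space set"
  assumes "affine L" "closed L" "L \<noteq> {}" "y \<in> L"
  shows "(x - closest_point L x) \<bullet> (y - closest_point L x) = 0"
proof -
  let ?q = "closest_point L x"
  have q: "?q \<in> L" using closest_point_in_set assms by blast
  have cv: "convex L" using assms(1) affine_imp_convex by blast
  have y2: "?q + (-1) *\<^sub>R (y - ?q) \<in> L" using mem_affine_3_minus[OF assms(1) q assms(4) q] .
  have "(x - ?q) \<bullet> (y - ?q) \<le> 0" using closest_point_dot[OF cv assms(2) assms(4)] .
  moreover have "(x - ?q) \<bullet> ((?q + (-1) *\<^sub>R (y - ?q)) - ?q) \<le> 0"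
    using closest_point_dot[OF cv assms(2) y2] .
  ultimately show ?thesis by (simp add: inner_diff_right inner_add_right)
qed

lemma resid_WL:
  fixes L :: "'a::euclidean_space set"
  assumes "affine L" "closed L" "L \<noteq> {}"
  shows "x - closest_point L x \<in> WL L"
  unfolding WL_def
proof (intro CollectI ballI)
  fix a b assume "a \<in> L" "b \<in> L"
  let ?q = "closest_point L x"
  have "(x - ?q) \<bullet> (a - ?q) = 0" "(x - ?q) \<bullet> (b - ?q) = 0"
    using orth_cp assms \<open>a \<in> L\<close> \<open>b \<in> L\<close> by blast+
  then have "(x - ?q) \<bullet> ((a - ?q) - (b - ?q)) = 0" by (simp add: inner_diff_right)
  then show "(x - ?q) \<bullet> (a - b) = 0" by simp
qed

lemma cp_shift:
  fixes L S :: "'a::euclidean_space set"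
  assumes "S \<subseteq> L" "closed S" "convex S" "a \<in> S" "w \<in> WL L"
  shows "closest_point S (a + w) = a"
proof -
  have "a = closest_point S (a + w)"
  proof (rule closest_point_unique[OF assms(3,2,4)], intro ballI)
    fix z assume z: "z \<in> S"
    have "norm (w + (a - z))^2 = norm w ^2 + norm (a - z)^2"
      using WL_pyth assms z by blast
    then have "norm w ^2 \<le> norm (w + (a - z))^2" by simp
    then have "norm w \<le> norm (w + (a - z))" by (rule dist_le_from_sq)
    then show "dist (a + w) a \<le> dist (a + w) z" by (simp add: dist_norm algebra_simps)
  qed
  then show ?thesis by simp
qed

lemma cp_L_char:
  fixes L :: "'a::euclidean_space set"
  assumes "affine L" "q \<in> L" "w \<in> WL L"
  shows "closest_point L (q + w) = q"
  using cp_shift[of L L q w] assms affine_closed affine_imp_convex by blast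

lemma cp_sub:
  fixes L S :: "'a::euclidean_space set"
  assumes "affine L" "L \<noteq> {}" "S \<subseteq> L" "closed S" "convex S" "S \<noteq> {}"
  shows "closest_point S x = closest_point S (closest_point L x)"
proof -
  have cL: "closed L" using assms(1) affine_closed by blast
  let ?q = "closest_point L x"
  let ?s = "closest_point S ?q"
  have q: "?q \<in> L" using closest_point_in_set cL assms by blast
  have s: "?s \<in> S" using closest_point_in_set assms by blast
  have w: "x - ?q \<in> WL L" using resid_WL assms cL by blast
  have "?s = closest_point S x"
  proof (rule closest_point_unique[OF assms(5,4) s], intro ballI)
    fix z assume z: "z \<in> S"
    have e1: "norm ((x - ?q) + (?q - ?s))^2 = norm (x - ?q)^2 + norm (?q - ?s)^2"
      using WL_pyth w q s assms by blast
    have e2: "norm ((x - ?q) + (?q - z))^2 = norm (x - ?q)^2 + norm (?q - z)^2"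
      using WL_pyth w q z assms by blast
    have "dist ?q ?s \<le> dist ?q z" using closest_point_le assms z by blast
    then have "norm (?q - ?s) ^2 \<le> norm (?q - z)^2" by (simp add: dist_norm power_mono)
    then have "norm ((x - ?q) + (?q - ?s)) \<le> norm ((x - ?q) + (?q - z))"
      using e1 e2 by (intro dist_le_from_sq) linarith
    then show "dist x ?s \<le> dist x z" by (simp add: dist_norm)
  qed
  then show ?thesis by simp
qed

lemma infdist_eq_min:
  assumes "z \<in> S" "\<forall>y\<in>S. dist x z \<le> dist x y"
  shows "infdist x S = dist x z"
proof (rule antisym)
  show "infdist x S \<le> dist x z" using infdist_le assms by blast
  have "S \<noteq> {}" using assms by blast
  then show "dist x z \<le> infdist x S"
    unfolding infdist_notempty[OF \<open>S \<noteq> {}\<close>] using assms by (intro cINF_greatest) auto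
qed

lemma ri_extend:
  fixes S :: "'a::euclidean_space set"
  assumes "c \<in> rel_interior S" "y \<in> S" "\<forall>y\<in>S. w \<bullet> (y - c) \<le> 0"
  shows "w \<bullet> (y - c) = 0"
proof -
  obtain e where e: "e > 0" "cball c e \<inter> affine hull S \<subseteq> S"
    using assms(1) mem_rel_interior_cball by blast
  have cS: "c \<in> S" using assms(1) rel_interior_subset by blast
  define v where "v = e / (norm (c - y) + 1)"
  have v: "v > 0" using e unfolding v_def by (intro divide_pos_pos) (auto intro: add_nonneg_pos)
  have "v * norm (c - y) \<le> e"
  proof -
    have "v * norm (c - y) \<le> v * (norm (c - y) + 1)" using v by simp
    also have "\<dots> = e" proof - have "norm (c - y) + 1 \<noteq> 0" using norm_ge_zero[of "c - y"] by linarith then show ?thesis unfolding v_def by simp qed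
    finally show ?thesis .
  qed
  moreover have "c + v *\<^sub>R (c - y) \<in> affine hull S"
    by (rule mem_affine_3_minus) (use cS assms(2) hull_inc in auto)
  ultimately have z: "c + v *\<^sub>R (c - y) \<in> S"
    using e v by (auto simp: dist_norm)
  have "w \<bullet> ((c + v *\<^sub>R (c - y)) - c) \<le> 0" using assms(3) z by blast
  then have "v * (w \<bullet> (c - y)) \<le> 0" by simp
  then have "w \<bullet> (c - y) \<le> 0" using v by (simp add: mult_le_0_iff)
  then have "w \<bullet> (y - c) \<ge> 0" by (simp add: inner_diff_right)
  then show ?thesis using assms(2,3) by force
qed

theorem proposition4p1:
  fixes A B :: "'a::euclidean_space set"
  assumes "A \<noteq> {}" "closed A" "convex A"
    and "B \<noteq> {}" "closed B" "convex B"
    and "A \<inter> B \<noteq> {}"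
  defines "L \<equiv> affine hull (A \<union> B)"
    and "T \<equiv> DR_op A B"
  shows "(\<forall>n::nat. \<forall>x. (T ^^ n) x = x - closest_point L x + (T ^^ n) (closest_point L x))
       \<and> (\<forall>x. x - T x = closest_point L x - T (closest_point L x))
       \<and> (rel_interior A \<inter> rel_interior B \<noteq> {} \<longrightarrow>
          (\<forall>x. closest_point (Fix T) x
               = x - closest_point L x + closest_point (A \<inter> B) (closest_point L x))
          \<and> (\<forall>x. infdist x (Fix T) = infdist (closest_point L x) (A \<inter> B)))"
proof -
  have affL: "affine L" unfolding L_def by simp
  have clL: "closed L" unfolding L_def by simp
  have AL: "A \<subseteq> L" and BL: "B \<subseteq> L" unfolding L_def by (auto intro: hull_inc)
  have neL: "L \<noteq> {}" using AL assms(1) by blast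
  have qL: "\<And>x. closest_point L x \<in> L" using closest_point_in_set clL neL by blast
  have uW: "\<And>x. x - closest_point L x \<in> WL L" using resid_WL affL clL neL by blast
  have PA: "\<And>x. closest_point A x = closest_point A (closest_point L x)"
    using cp_sub[OF affL neL AL assms(2,3,1)] .
  have PB: "\<And>x. closest_point B x = closest_point B (closest_point L x)"
    using cp_sub[OF affL neL BL assms(5,6,4)] .
  have TL: "T q \<in> L" if "q \<in> L" for q
  proof -
    have a: "closest_point A q \<in> L" using closest_point_in_set assms(1,2) AL by blast
    have b: "closest_point B (reflector A q) \<in> L" using closest_point_in_set assms(4,5) BL by blast
    have "closest_point B (reflector A q) + 1 *\<^sub>R (q - closest_point A q) \<in> L"
      by (rule mem_affine_3_minus[OF affL b that a])
    then show ?thesis unfolding T_def DR_op_def by (simp add: algebra_simps)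
  qed
  have Tshift: "T x = T (closest_point L x) + (x - closest_point L x)" for x
  proof -
    define q where "q = closest_point L x"
    define u where "u = x - q"
    define a where "a = closest_point A q"
    have q: "q \<in> L" unfolding q_def by (rule qL)
    have u: "u \<in> WL L" unfolding u_def q_def by (rule uW)
    have aL: "a \<in> L" unfolding a_def using closest_point_in_set assms(1,2) AL by blast
    have PAx: "closest_point A x = a" unfolding a_def q_def using PA by simp
    have m: "a + 1 *\<^sub>R (a - q) \<in> L" by (rule mem_affine_3_minus[OF affL aL aL q])
    have RAx: "reflector A x = (2 *\<^sub>R a - q) + (- u)"
      unfolding reflector_def PAx u_def by (simp add: algebra_simps)
    have RAq: "reflector A q = 2 *\<^sub>R a - q" unfolding reflector_def a_def by simp
    have "closest_point L (reflector A x) = 2 *\<^sub>R a - q"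
      unfolding RAx
      by (rule cp_L_char[OF affL]) (use m WL_minus[OF u] in \<open>auto simp: algebra_simps scaleR_2\<close>)
    then have "closest_point B (reflector A x) = closest_point B (reflector A q)"
      using PB[of "reflector A x"] RAq by simp
    then show ?thesis
      unfolding T_def DR_op_def PAx
      by (simp add: a_def q_def[symmetric] algebra_simps)
  qed
  have Tadd: "T (y + u) = T y + u" if "y \<in> L" "u \<in> WL L" for y u
  proof -
    have "closest_point L (y + u) = y" by (rule cp_L_char[OF affL that])
    then show ?thesis using Tshift[of "y + u"] by simp
  qed
  have TnL: "(T ^^ n) q \<in> L" if "q \<in> L" for n q
    using that by (induction n) (auto intro: TL)
  have Tnadd: "(T ^^ n) (q + u) = (T ^^ n) q + u" if "q \<in> L" "u \<in> WL L" for n q u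
  proof (induction n)
    case 0 then show ?case by simp
  next
    case (Suc n)
    then show ?case using Tadd[OF TnL[OF that(1)] that(2)] by simp
  qed
  have partA: "\<forall>n::nat. \<forall>x. (T ^^ n) x = x - closest_point L x + (T ^^ n) (closest_point L x)"
  proof (intro allI)
    fix n x
    have "(T ^^ n) (closest_point L x + (x - closest_point L x))
        = (T ^^ n) (closest_point L x) + (x - closest_point L x)"
      by (rule Tnadd[OF qL uW])
    then show "(T ^^ n) x = x - closest_point L x + (T ^^ n) (closest_point L x)"
      by (simp add: algebra_simps)
  qed
  have partB: "\<forall>x. x - T x = closest_point L x - T (closest_point L x)"
    using Tshift by (simp add: algebra_simps)
  have partCD: "(\<forall>x. closest_point (Fix T) x
               = x - closest_point L x + closest_point (A \<inter> B) (closest_point L x))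
          \<and> (\<forall>x. infdist x (Fix T) = infdist (closest_point L x) (A \<inter> B))"
    if ri: "rel_interior A \<inter> rel_interior B \<noteq> {}"
  proof -
    obtain c where cA: "c \<in> rel_interior A" and cB: "c \<in> rel_interior B" using ri by blast
    have FixC: "Fix T = {a + w | a w. a \<in> A \<inter> B \<and> w \<in> WL L}"
    proof (rule set_eqI, rule iffI)
      fix x assume "x \<in> Fix T"
      then have Tx: "T x = x" unfolding Fix_def by simp
      define q where "q = closest_point L x"
      define u where "u = x - q"
      have q: "q \<in> L" unfolding q_def by (rule qL)
      have u: "u \<in> WL L" unfolding u_def q_def by (rule uW)
      have Tq: "T q = q" using Tx Tshift[of x] unfolding u_def q_def by simp
      define a where "a = closest_point A q"
      have aA: "a \<in> A" unfolding a_def using closest_point_in_set assms(1,2) by blast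
      have RAq: "reflector A q = 2 *\<^sub>R a - q" unfolding reflector_def a_def by simp
      have PBa: "closest_point B (2 *\<^sub>R a - q) = a"
        using Tq unfolding T_def DR_op_def RAq a_def[symmetric] by (simp add: algebra_simps)
      have aB: "a \<in> B" using closest_point_in_set[OF assms(5,4), of "2 *\<^sub>R a - q"] PBa by simp
      define w where "w = q - a"
      have dA: "\<forall>y\<in>A. w \<bullet> (y - a) \<le> 0"
        using closest_point_dot[OF assms(3,2)] unfolding w_def a_def by blast
      have dB: "\<forall>y\<in>B. (- w) \<bullet> (y - a) \<le> 0"
      proof
        fix y assume "y \<in> B"
        from closest_point_dot[OF assms(6,5) this, of "2 *\<^sub>R a - q"]
        show "(- w) \<bullet> (y - a) \<le> 0" unfolding PBa w_def by (simp add: algebra_simps scaleR_2)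
      qed
      have cAA: "c \<in> A" and cBB: "c \<in> B" using cA cB rel_interior_subset by blast+
      have wca: "w \<bullet> (c - a) = 0" using dA cAA dB cBB by force
      have eA: "\<forall>y\<in>A. w \<bullet> (y - c) = 0"
      proof
        fix y assume y: "y \<in> A"
        have "\<forall>y\<in>A. w \<bullet> (y - c) \<le> 0"
        proof
          fix y assume "y \<in> A"
          then have "w \<bullet> (y - a) \<le> 0" using dA by blast
          moreover have "w \<bullet> (y - c) = w \<bullet> (y - a) - w \<bullet> (c - a)" by (simp add: inner_diff_right)
          ultimately show "w \<bullet> (y - c) \<le> 0" using wca by simp
        qed
        then show "w \<bullet> (y - c) = 0" using ri_extend[OF cA y] by blast
      qed
      have eB: "\<forall>y\<in>B. w \<bullet> (y - c) = 0"
      proof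
        fix y assume y: "y \<in> B"
        have "\<forall>y\<in>B. (- w) \<bullet> (y - c) \<le> 0"
        proof
          fix y assume "y \<in> B"
          then have "(- w) \<bullet> (y - a) \<le> 0" using dB by blast
          moreover have "(- w) \<bullet> (y - c) = (- w) \<bullet> (y - a) + w \<bullet> (c - a)" by (simp add: inner_diff_right)
          ultimately show "(- w) \<bullet> (y - c) \<le> 0" using wca by simp
        qed
        then have "(- w) \<bullet> (y - c) = 0" using ri_extend[OF cB y] by blast
        then show "w \<bullet> (y - c) = 0" by simp
      qed
      have "A \<union> B \<subseteq> {z. w \<bullet> z = w \<bullet> c}" using eA eB by (auto simp: inner_diff_right)
      then have "L \<subseteq> {z. w \<bullet> z = w \<bullet> c}" unfolding L_def
        by (rule hull_minimal) (rule affine_hyperplane)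
      then have wW: "w \<in> WL L" unfolding WL_def by (fastforce simp: inner_diff_right subset_iff)
      have "x = a + (w + u)" unfolding w_def u_def by simp
      then show "x \<in> {a + w | a w. a \<in> A \<inter> B \<and> w \<in> WL L}"
        using aA aB WL_add[OF wW u] by blast
    next
      fix x assume "x \<in> {a + w | a w. a \<in> A \<inter> B \<and> w \<in> WL L}"
      then obtain a w where a: "a \<in> A" "a \<in> B" and w: "w \<in> WL L" and x: "x = a + w" by blast
      have PAx: "closest_point A x = a" unfolding x by (rule cp_shift[OF AL assms(2,3) a(1) w])
      have "reflector A x = a + (- w)" unfolding reflector_def PAx by (simp add: x algebra_simps scaleR_2)
      then have "closest_point B (reflector A x) = a"
        using cp_shift[OF BL assms(5,6) a(2) WL_minus[OF w]] by simp
      then show "x \<in> Fix T" unfolding Fix_def T_def DR_op_def using PAx by simp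
    qed
    have ABL: "A \<inter> B \<subseteq> L" using AL by blast
    have clAB: "closed (A \<inter> B)" using assms(2,5) by blast
    have cvAB: "convex (A \<inter> B)" using assms(3,6) convex_Int by blast
    have neAB: "A \<inter> B \<noteq> {}" by (rule assms(7))
    have main: "closest_point (Fix T) x = x - closest_point L x + closest_point (A \<inter> B) (closest_point L x)
       \<and> infdist x (Fix T) = infdist (closest_point L x) (A \<inter> B)" for x
    proof -
      define q where "q = closest_point L x"
      define u where "u = x - q"
      define c0 where "c0 = closest_point (A \<inter> B) q"
      define z where "z = c0 + u"
      have q: "q \<in> L" unfolding q_def by (rule qL)
      have u: "u \<in> WL L" unfolding u_def q_def by (rule uW)
      have c0: "c0 \<in> A \<inter> B" unfolding c0_def using closest_point_in_set[OF clAB neAB] .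
      have c0le: "\<forall>y\<in>A \<inter> B. dist q c0 \<le> dist q y" unfolding c0_def using closest_point_le[OF clAB] by blast
      have zF: "z \<in> Fix T" unfolding FixC z_def using c0 u by blast
      have dz: "dist x z = dist q c0" unfolding z_def u_def dist_norm by (simp add: algebra_simps)
      have dy: "(dist x (a' + w'))^2 = norm (u - w')^2 + (dist q a')^2"
        if "a' \<in> A \<inter> B" "w' \<in> WL L" for a' w'
      proof -
        have "x - (a' + w') = (u - w') + (q - a')" unfolding u_def by (simp add: algebra_simps)
        moreover have "norm ((u - w') + (q - a'))^2 = norm (u - w')^2 + norm (q - a')^2"
          by (rule WL_pyth) (use WL_diff[OF u that(2)] q that(1) ABL in auto)
        ultimately show ?thesis by (metis dist_norm)
      qed
      have zmin: "\<forall>y\<in>Fix T. dist x z \<le> dist x y"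
      proof
        fix y assume "y \<in> Fix T"
        then obtain a' w' where a': "a' \<in> A \<inter> B" and w': "w' \<in> WL L" and y: "y = a' + w'"
          unfolding FixC by blast
        have "(dist q c0)^2 \<le> (dist q a')^2" using c0le a' by (simp add: power_mono)
        then have "(dist x z)^2 \<le> (dist x y)^2" unfolding dz y dy[OF a' w'] using zero_le_power2[of "norm (u - w')"] by linarith
        then show "dist x z \<le> dist x y" by (simp add: power_mono_iff)
      qed
      have cpF: "closest_point (Fix T) x = z"
        unfolding closest_point_def
      proof (rule some_equality)
        show "z \<in> Fix T \<and> (\<forall>y\<in>Fix T. dist x z \<le> dist x y)" using zF zmin by blast
      next
        fix y assume H: "y \<in> Fix T \<and> (\<forall>y'\<in>Fix T. dist x y \<le> dist x y')"
        then obtain a' w' where a': "a' \<in> A \<inter> B" and w': "w' \<in> WL L" and y: "y = a' + w'"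
          unfolding FixC by blast
        have "dist x y \<le> dist x z" using H zF by blast
        then have "(dist x y)^2 \<le> (dist x z)^2" by (simp add: power_mono)
        then have h: "norm (u - w')^2 + (dist q a')^2 \<le> (dist q c0)^2" unfolding y dy[OF a' w'] dz .
        have "(dist q c0)^2 \<le> (dist q a')^2" using c0le a' by (simp add: power_mono)
        then have "norm (u - w')^2 \<le> 0" using h by linarith
        then have uw: "w' = u" by simp
        have "(dist q a')^2 \<le> (dist q c0)^2" using h by (smt (verit) zero_le_power2)
        then have "dist q a' \<le> dist q c0" by (simp add: power_mono_iff)
        then have "\<forall>y\<in>A \<inter> B. dist q a' \<le> dist q y" using c0le by force
        then have "a' = c0" unfolding c0_def by (rule closest_point_unique[OF cvAB clAB a'])
        then show "y = z" unfolding y z_def uw by simp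
      qed
      have i1: "infdist x (Fix T) = dist x z" by (rule infdist_eq_min[OF zF zmin])
      have i2: "infdist q (A \<inter> B) = dist q c0" by (rule infdist_eq_min[OF c0 c0le])
      show ?thesis
        using cpF i1 i2 dz unfolding z_def u_def c0_def q_def by (simp add: algebra_simps)
    qed
    show ?thesis using main by blast
  qed
  show ?thesis using partA partB partCD by blast
qed

end
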